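(* Let $\mathcal S = \mathrm{span}\{g_1,\dots,g_{N-k}\}$, with $0\le k\le N$ and $g_1,\dots,g_{N-k}$ independent, be a toy stabilizer group on $N$ elementary systems. Then the epistemic state of $\mathcal S$ can be written as the mixture of $2^k$ pure states; that is, there exist $2^k$ toy stabilizer groups, each with $N$ independent generators, such that the state of $\mathcal S$ is obtained from them by iterated pairwise mixtures.
   Context: Toy Pauli matrices: $\mathcal{X} = \mathrm{diag}(1,-1,1,-1)$, $\mathcal{Y} = \mathrm{diag}(1,-1,-1,1)$, $\mathcal{Z} = \mathrm{diag}(1,1,-1,-1)$; the toy Pauli group is $G_N = \{\alpha\, p_1\otimes\cdots\otimes p_N : p_i \in \{\mathbb{1}_4,\mathcal X,\mathcal Y,\mathcal Z\}, \alpha\in\{\pm1\}\}$. Let $m: G_N\to P_N$ be the homomorphism into the $N$-qubit Pauli group with $m(\mathcal X_k)=X_k$, $m(\mathcal Z_k)=Z_k$, $m(-\mathbb 1)=-\mathbb 1$; $g,h\in G_N$ "commute" if $m(g),m(h)$ commute. A toy stabilizer group is a subgroup of $G_N$ whose elements pairwise "commute" and which does not contain $-\mathbb 1$; its epistemic state is the set of ontic states $e_{i_1}\otimes\cdots\otimes e_{i_N}$ ($e_i$ the standard basis of $\mathbb R^4$) fixed by every element of the group. A stabilizer group is pure (maximal information) if it has $N$ independent generators, and mixed otherwise. A stabilizer group $\mathcal S'$ is a rephasing of $\mathcal S$ if for every $g\in\mathcal S$, $g\in\mathcal S'$ or $-g\in \mathcal S'$. For two stabilizer groups $\mathcal S,\mathcal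 S'$ that are rephasings of each other, their mixture is the state with stabilizer group $\mathcal S\cap\mathcal S'$. *)

theory Defs
  imports Main
begin

datatype pauli = PI | PX | PY | PZ

text \<open>Diagonal entries of the toy Pauli matrices (indices 0..3):
  X = diag(1,-1,1,-1), Y = diag(1,-1,-1,1), Z = diag(1,1,-1,-1).\<close>
fun pval :: "pauli \<Rightarrow> nat \<Rightarrow> int" where
  "pval PI i = 1"
| "pval PX i = (if i = 0 \<or> i = 2 then 1 else -1)"
| "pval PY i = (if i = 0 \<or> i = 3 then 1 else -1)"
| "pval PZ i = (if i = 0 \<or> i = 1 then 1 else -1)"

text \<open>Products of single-site toy Pauli matrices (all diagonal, no phases).\<close>
fun pmul :: "pauli \<Rightarrow> pauli \<Rightarrow> pauli" where
  "pmul PI q = q"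
| "pmul p PI = p"
| "pmul PX PX = PI" | "pmul PY PY = PI" | "pmul PZ PZ = PI"
| "pmul PX PY = PZ" | "pmul PY PX = PZ"
| "pmul PX PZ = PY" | "pmul PZ PX = PY"
| "pmul PY PZ = PX" | "pmul PZ PY = PX"

text \<open>An element alpha p_1 (x) ... (x) p_N, encoded as (neg, [p_1,...,p_N]) with
  alpha = -1 iff neg.\<close>
type_synonym toy = "bool \<times> pauli list"

definition toyG :: "nat \<Rightarrow> toy set" where
  "toyG N = {g. length (snd g) = N}"

definition tone :: "nat \<Rightarrow> toy" where
  "tone N = (False, replicate N PI)"

definition tminus_one :: "nat \<Rightarrow> toy" where
  "tminus_one N = (True, replicate N PI)"

definition tmul :: "toy \<Rightarrow> toy \<Rightarrow> toy" where
  "tmul g h = (fst g \<noteq> fst h, map2 pmul (snd g) (snd h))"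

definition tneg :: "toy \<Rightarrow> toy" where
  "tneg g = (\<not> fst g, snd g)"

text \<open>Diagonal entry of a toy Pauli element at ontic state e_{i_1} (x) ... (x) e_{i_N}.\<close>
definition tval :: "toy \<Rightarrow> nat list \<Rightarrow> int" where
  "tval g is = (if fst g then -1 else 1) *
      (\<Prod>k<length (snd g). pval (snd g ! k) (is ! k))"

text \<open>m(X)=X, m(Z)=Z, m(Y)=m(XZ)=XZ. Single-site images m(p), m(q) anticommute iff
  both are non-identity and different; tensor products commute iff the number of
  anticommuting sites is even.\<close>
definition panti :: "pauli \<Rightarrow> pauli \<Rightarrow> bool" where
  "panti p q \<longleftrightarrow> p \<noteq> PI \<and> q \<noteq> PI \<and> p \<noteq> q"

definition tcomm :: "toy \<Rightarrow> toy \<Rightarrow> bool" where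
  "tcomm g h \<longleftrightarrow> even (card {k. k < length (snd g) \<and> panti (snd g ! k) (snd h ! k)})"

text \<open>Every element is an involution, so a subset containing the identity and closed
  under products is a subgroup.\<close>
definition toy_subgroup :: "nat \<Rightarrow> toy set \<Rightarrow> bool" where
  "toy_subgroup N S \<longleftrightarrow> S \<subseteq> toyG N \<and> tone N \<in> S \<and> (\<forall>g\<in>S. \<forall>h\<in>S. tmul g h \<in> S)"

definition toy_stab :: "nat \<Rightarrow> toy set \<Rightarrow> bool" where
  "toy_stab N S \<longleftrightarrow> toy_subgroup N S \<and> (\<forall>g\<in>S. \<forall>h\<in>S. tcomm g h) \<and> tminus_one N \<notin> S"

inductive_set tspan :: "nat \<Rightarrow> toy set \<Rightarrow> toy set" for N :: nat and A :: "toy set" where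
  one: "tone N \<in> tspan N A"
| gen: "g \<in> A \<Longrightarrow> g \<in> tspan N A"
| mul: "g \<in> tspan N A \<Longrightarrow> h \<in> tspan N A \<Longrightarrow> tmul g h \<in> tspan N A"

definition tindep :: "nat \<Rightarrow> toy list \<Rightarrow> bool" where
  "tindep N gs \<longleftrightarrow> distinct gs \<and>
     (\<forall>i<length gs. gs ! i \<notin> tspan N (set gs - {gs ! i}))"

definition toy_pure :: "nat \<Rightarrow> toy set \<Rightarrow> bool" where
  "toy_pure N S \<longleftrightarrow> toy_stab N S \<and>
     (\<exists>gs. length gs = N \<and> set gs \<subseteq> toyG N \<and> tindep N gs \<and> S = tspan N (set gs))"

definition epistemic_state :: "nat \<Rightarrow> toy set \<Rightarrow> nat list set" where
  "epistemic_state N S = {is. length is = N \<and> (\<forall>k<N. is ! k < 4) \<and> (\<forall>g\<in>S. tval g is = 1)}"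

definition rephasing_of :: "toy set \<Rightarrow> toy set \<Rightarrow> bool" where
  "rephasing_of S' S \<longleftrightarrow> (\<forall>g\<in>S. g \<in> S' \<or> tneg g \<in> S')"

inductive mixes :: "nat \<Rightarrow> toy set list \<Rightarrow> toy set \<Rightarrow> bool" for N :: nat where
  leaf: "toy_stab N S \<Longrightarrow> mixes N [S] S"
| mix: "mixes N A S1 \<Longrightarrow> mixes N B S2 \<Longrightarrow> toy_stab N S1 \<Longrightarrow> toy_stab N S2 \<Longrightarrow>
        rephasing_of S1 S2 \<Longrightarrow> rephasing_of S2 S1 \<Longrightarrow> mixes N (A @ B) (S1 \<inter> S2)"

end

theory Submission
  imports Defs
begin

lemma pmul_comm: "pmul p q = pmul q p" by (cases p; cases q) auto
lemma pmul_assoc: "pmul (pmul p q) r = pmul p (pmul q r)" by (cases p; cases q; cases r) auto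
lemma pmul_self[simp]: "pmul p p = PI" by (cases p) auto
lemma pmul_PI2[simp]: "pmul p PI = p" by (cases p) auto
lemma pmul_cancel[simp]: "pmul p (pmul p q) = q" by (cases p; cases q) auto
lemma panti_mul1: "panti (pmul p q) r = (panti p r \<noteq> panti q r)"
  by (cases p; cases q; cases r) (auto simp: panti_def)
lemma panti_mul2: "panti r (pmul p q) = (panti r p \<noteq> panti r q)"
  by (cases p; cases q; cases r) (auto simp: panti_def)
lemma panti_sym: "panti p q = panti q p" by (auto simp: panti_def)
lemma panti_PI[simp]: "\<not> panti p PI" "\<not> panti PI p" by (auto simp: panti_def)

lemma toyG_iff: "g \<in> toyG N \<longleftrightarrow> length (snd g) = N" by (simp add: toyG_def)

lemma tmul_assoc: "tmul (tmul a b) c = tmul a (tmul b c)"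
  unfolding tmul_def by (auto intro!: nth_equalityI simp: pmul_assoc)

lemma tmul_comm: "tmul a b = tmul b a"
  unfolding tmul_def by (auto intro!: nth_equalityI simp: pmul_comm)

lemma tmul_self: "g \<in> toyG N \<Longrightarrow> tmul g g = tone N"
  unfolding tmul_def tone_def toyG_iff by (auto intro!: nth_equalityI)

lemma tmul_one: "g \<in> toyG N \<Longrightarrow> tmul (tone N) g = g"
  unfolding tmul_def tone_def toyG_iff by (cases g) (auto intro!: nth_equalityI)

lemma tmul_one2: "g \<in> toyG N \<Longrightarrow> tmul g (tone N) = g"
  using tmul_one tmul_comm by metis

lemma tmul_cancel: "g \<in> toyG N \<Longrightarrow> h \<in> toyG N \<Longrightarrow> tmul g (tmul g h) = h"
  by (metis tmul_assoc tmul_self tmul_one)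

lemma tneg_tmul1: "tmul (tneg a) b = tneg (tmul a b)" by (simp add: tmul_def tneg_def)
lemma tneg_tmul2: "tmul a (tneg b) = tneg (tmul a b)" by (simp add: tmul_def tneg_def)
lemma tneg_tneg[simp]: "tneg (tneg a) = a" by (simp add: tneg_def)
lemma tneg_tone: "tneg (tone N) = tminus_one N" by (simp add: tneg_def tone_def tminus_one_def)
lemma tneg_toyG: "tneg a \<in> toyG N \<longleftrightarrow> a \<in> toyG N" by (simp add: tneg_def toyG_iff)
lemma tmul_toyG: "a \<in> toyG N \<Longrightarrow> b \<in> toyG N \<Longrightarrow> tmul a b \<in> toyG N"
  by (simp add: tmul_def toyG_iff)
lemma tone_toyG: "tone N \<in> toyG N" by (simp add: tone_def toyG_iff)

lemma span_toyG: "A \<subseteq> toyG N \<Longrightarrow> tspan N A \<subseteq> toyG N"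
proof
  fix x assume A: "A \<subseteq> toyG N" and x: "x \<in> tspan N A"
  from x show "x \<in> toyG N"
    using A by (induction rule: tspan.induct) (auto simp: tone_toyG tmul_toyG)
qed

lemma span_mono: "A \<subseteq> B \<Longrightarrow> tspan N A \<subseteq> tspan N B"
proof
  fix x assume A: "A \<subseteq> B" and x: "x \<in> tspan N A"
  from x show "x \<in> tspan N B"
    using A by (induction rule: tspan.induct) (auto intro: tspan.intros)
qed

lemma span_insert:
  assumes A: "A \<subseteq> toyG N" and h: "h \<in> toyG N"
  shows "tspan N (insert h A) = tspan N A \<union> tmul h ` tspan N A"
proof
  show "tspan N A \<union> tmul h ` tspan N A \<subseteq> tspan N (insert h A)"
  proof -
    have "tspan N A \<subseteq> tspan N (insert h A)" by (rule span_mono) auto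
    moreover have "tmul h ` tspan N A \<subseteq> tspan N (insert h A)"
    proof
      fix y assume "y \<in> tmul h ` tspan N A"
      then obtain a where a: "a \<in> tspan N A" "y = tmul h a" by blast
      have "h \<in> tspan N (insert h A)" by (rule tspan.gen) simp
      then show "y \<in> tspan N (insert h A)" using a calculation by (auto intro: tspan.mul)
    qed
    ultimately show ?thesis by blast
  qed
next
  have SG: "tspan N A \<subseteq> toyG N" using span_toyG[OF A] .
  show "tspan N (insert h A) \<subseteq> tspan N A \<union> tmul h ` tspan N A"
  proof
    fix x assume "x \<in> tspan N (insert h A)"
    then show "x \<in> tspan N A \<union> tmul h ` tspan N A"
    proof (induction rule: tspan.induct)
      case one then show ?case by (auto intro: tspan.intros)
    next
      case (gen g)
      then show ?case
      proof
        assume "g = h"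
        then have "g = tmul h (tone N)" using tmul_one2[OF h] by simp
        then show ?thesis by (auto intro: tspan.intros)
      qed (auto intro: tspan.intros)
    next
      case (mul g1 g2)
      consider (a) "g1 \<in> tspan N A" | (b) a where "a \<in> tspan N A" "g1 = tmul h a"
        using mul.IH by blast
      then show ?case
      proof cases
        case a
        consider (c) "g2 \<in> tspan N A" | (d) b where "b \<in> tspan N A" "g2 = tmul h b"
          using mul.IH by blast
        then show ?thesis
        proof cases
          case c then show ?thesis using a by (auto intro: tspan.intros)
        next
          case d
          then have "tmul g1 g2 = tmul h (tmul g1 b)" by (metis tmul_assoc tmul_comm)
          then show ?thesis using a d by (auto intro: tspan.intros)
        qed
      next
        case b
        consider (c) "g2 \<in> tspan N A" | (d) c where "c \<in> tspan N A" "g2 = tmul h c"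
          using mul.IH by blast
        then show ?thesis
        proof cases
          case c
          then have "tmul g1 g2 = tmul h (tmul a g2)" using b by (metis tmul_assoc)
          then show ?thesis using b c by (auto intro: tspan.intros)
        next
          case d
          have "a \<in> toyG N" using b SG by auto
          then have "tmul g1 g2 = tmul a c" using b d
            by (metis tmul_assoc tmul_comm tmul_cancel h)
          then show ?thesis using b d by (auto intro: tspan.intros)
        qed
      qed
    qed
  qed
qed

lemma span_empty: "tspan N {} = {tone N}"
proof
  show "tspan N {} \<subseteq> {tone N}"
  proof
    fix x assume "x \<in> tspan N {}"
    then show "x \<in> {tone N}"
      by (induction rule: tspan.induct) (auto simp: tmul_self tone_toyG)
  qed
qed (auto intro: tspan.intros)

lemma span_card: "set gs \<subseteq> toyG N \<Longrightarrow>
   finite (tspan N (set gs)) \<and> card (tspan N (set gs)) \<le> 2 ^ length gs"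
proof (induction gs)
  case Nil then show ?case by (simp add: span_empty)
next
  case (Cons g gs)
  then have fin: "finite (tspan N (set gs))" and c: "card (tspan N (set gs)) \<le> 2 ^ length gs"
    by auto
  have eq: "tspan N (set (g # gs)) = tspan N (set gs) \<union> tmul g ` tspan N (set gs)"
    using Cons.prems by (simp add: span_insert)
  have "card (tspan N (set (g # gs))) \<le> card (tspan N (set gs)) + card (tmul g ` tspan N (set gs))"
    unfolding eq by (rule card_Un_le)
  also have "\<dots> \<le> 2 * card (tspan N (set gs))" using card_image_le[OF fin] by simp
  finally show ?case using fin c eq by simp
qed

lemma card_Suc_pred: "card {k::nat. k < Suc n \<and> P k} = card {k. k < n \<and> P k} + (if P n then 1 else 0)"
proof -
  have "{k. k < Suc n \<and> P k} = (if P n then insert n {k. k < n \<and> P k} else {k. k < n \<and> P k})"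
    by (auto simp: less_Suc_eq)
  then show ?thesis by simp
qed

lemma parity_xor: "even (card {k. k < (n::nat) \<and> (P k \<noteq> Q k)}) =
   (even (card {k. k < n \<and> P k}) = even (card {k. k < n \<and> Q k}))"
proof (induction n)
  case 0 then show ?case by simp
next
  case (Suc n)
  show ?case unfolding card_Suc_pred[of n] using Suc by auto
qed

lemma tcomm_mul1:
  assumes "g \<in> toyG N" "h \<in> toyG N" "u \<in> toyG N"
  shows "tcomm (tmul g h) u = (tcomm g u = tcomm h u)"
proof -
  have "{k. k < length (snd (tmul g h)) \<and> panti (snd (tmul g h) ! k) (snd u ! k)} =
        {k. k < N \<and> (panti (snd g ! k) (snd u ! k) \<noteq> panti (snd h ! k) (snd u ! k))}"
    using assms by (auto simp: tmul_def toyG_iff panti_mul1)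
  then show ?thesis using assms parity_xor[of N "\<lambda>k. panti (snd g ! k) (snd u ! k)" "\<lambda>k. panti (snd h ! k) (snd u ! k)"]
    unfolding tcomm_def by (simp add: toyG_iff)
qed

lemma tcomm_mul2:
  assumes "g \<in> toyG N" "h \<in> toyG N" "u \<in> toyG N"
  shows "tcomm u (tmul g h) = (tcomm u g = tcomm u h)"
proof -
  have "{k. k < length (snd u) \<and> panti (snd u ! k) (snd (tmul g h) ! k)} =
        {k. k < N \<and> (panti (snd u ! k) (snd g ! k) \<noteq> panti (snd u ! k) (snd h ! k))}"
    using assms by (auto simp: tmul_def toyG_iff panti_mul2)
  then show ?thesis using assms parity_xor[of N "\<lambda>k. panti (snd u ! k) (snd g ! k)" "\<lambda>k. panti (snd u ! k) (snd h ! k)"]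
    unfolding tcomm_def by (simp add: toyG_iff)
qed

lemma tcomm_sym: "length (snd g) = length (snd h) \<Longrightarrow> tcomm g h = tcomm h g"
  unfolding tcomm_def by (simp add: panti_sym)

lemma tcomm_tone: "x \<in> toyG N \<Longrightarrow> tcomm x (tone N)"
proof -
  assume "x \<in> toyG N"
  then have "{k. k < length (snd x) \<and> panti (snd x ! k) (snd (tone N) ! k)} = {}"
    unfolding tone_def toyG_iff by auto
  then show ?thesis unfolding tcomm_def by (metis card.empty even_zero)
qed

lemma tcomm_self: "tcomm x x"
  unfolding tcomm_def by (simp add: panti_def)

lemma tcomm_tneg1: "tcomm (tneg g) h = tcomm g h" by (simp add: tcomm_def tneg_def)
lemma tcomm_tneg2: "tcomm g (tneg h) = tcomm g h" by (simp add: tcomm_def tneg_def)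

lemma comm_span:
  assumes x: "x \<in> toyG N" and A: "A \<subseteq> toyG N" and c: "\<forall>g\<in>A. tcomm x g"
    and gm: "y \<in> tspan N A"
  shows "tcomm x y"
  using gm
proof (induction rule: tspan.induct)
  case one then show ?case using x by (rule tcomm_tone)
next
  case (gen g) then show ?case using c by auto
next
  case (mul g h)
  have "g \<in> toyG N" "h \<in> toyG N" using mul.hyps span_toyG[OF A] by auto
  then show ?case using mul.IH tcomm_mul2 x by simp
qed

lemma pauli_UNIV: "(UNIV :: pauli set) = {PI, PX, PY, PZ}"
  using pauli.exhaust by auto

lemma map2_cancel: "length w = length v \<Longrightarrow> map2 pmul w (map2 pmul w v) = v"
  by (auto intro!: nth_equalityI)

lemma exists_ext:
  assumes gs: "set gs \<subseteq> toyG N" and m: "length gs < N"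
  shows "\<exists>v. length v = N \<and> (\<forall>g\<in>set gs. tcomm (False, v) g) \<and> v \<notin> snd ` tspan N (set gs)"
proof -
  define U where "U = {v::pauli list. set v \<subseteq> UNIV \<and> length v = N}"
  have finP: "finite (UNIV :: pauli set)" and cP: "card (UNIV :: pauli set) = 4"
    by (simp_all add: pauli_UNIV)
  have finU: "finite U" and cU: "card U = 4 ^ N"
    unfolding U_def using finite_lists_length_eq[OF finP] card_lists_length_eq[OF finP] cP by auto
  define B where "B = {bs::bool list. set bs \<subseteq> UNIV \<and> length bs = length gs}"
  have finB: "finite B" and cB: "card B = 2 ^ length gs"
    unfolding B_def using finite_lists_length_eq[of "UNIV::bool set"] card_lists_length_eq[of "UNIV::bool set"]
    by auto
  define \<phi> where "\<phi> v = map (\<lambda>g. tcomm (False, v) g) gs" for v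
  define K where "K = {v\<in>U. \<forall>g\<in>set gs. tcomm (False, v) g}"
  define rep where "rep b = (SOME w. w \<in> U \<and> \<phi> w = b)" for b
  define \<psi> where "\<psi> v = (\<phi> v, map2 pmul (rep (\<phi> v)) v)" for v
  have rep: "rep (\<phi> v) \<in> U \<and> \<phi> (rep (\<phi> v)) = \<phi> v" if "v \<in> U" for v
    unfolding rep_def by (rule someI[of _ v]) (use that in auto)
  have inj: "inj_on \<psi> U"
  proof (rule inj_onI)
    fix v1 v2 assume v: "v1 \<in> U" "v2 \<in> U" "\<psi> v1 = \<psi> v2"
    then have e: "\<phi> v1 = \<phi> v2" and e2: "map2 pmul (rep (\<phi> v1)) v1 = map2 pmul (rep (\<phi> v1)) v2"
      unfolding \<psi>_def by auto
    have l: "length (rep (\<phi> v1)) = N" using rep[OF v(1)] unfolding U_def by auto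
    have "v1 = map2 pmul (rep (\<phi> v1)) (map2 pmul (rep (\<phi> v1)) v1)"
      using map2_cancel l v(1) unfolding U_def by auto
    also have "\<dots> = map2 pmul (rep (\<phi> v1)) (map2 pmul (rep (\<phi> v1)) v2)" using e2 by simp
    also have "\<dots> = v2" using map2_cancel l v(2) unfolding U_def by auto
    finally show "v1 = v2" .
  qed
  have img: "\<psi> ` U \<subseteq> B \<times> K"
  proof
    fix x assume "x \<in> \<psi> ` U"
    then obtain v where v: "v \<in> U" "x = \<psi> v" by blast
    define w where "w = rep (\<phi> v)"
    have w: "w \<in> U" "\<phi> w = \<phi> v" using rep[OF v(1)] unfolding w_def by auto
    have "map2 pmul w v \<in> K"
      unfolding K_def
    proof (intro CollectI conjI ballI)
      show "map2 pmul w v \<in> U" using v w unfolding U_def by auto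
    next
      fix g assume g: "g \<in> set gs"
      have gG: "g \<in> toyG N" using g gs by auto
      have "(False, map2 pmul w v) = tmul (False, w) (False, v)" by (simp add: tmul_def)
      moreover have "tcomm (tmul (False, w) (False, v)) g = (tcomm (False, w) g = tcomm (False, v) g)"
        by (rule tcomm_mul1[OF _ _ gG]) (use v w in \<open>auto simp: U_def toyG_iff\<close>)
      moreover have "tcomm (False, w) g = tcomm (False, v) g" using w(2) g unfolding \<phi>_def by auto
      ultimately show "tcomm (False, map2 pmul w v) g" by simp
    qed
    moreover have "\<phi> v \<in> B" unfolding B_def \<phi>_def by simp
    ultimately show "x \<in> B \<times> K" using v unfolding \<psi>_def w_def by simp
  qed
  have finK: "finite K" using finU unfolding K_def by auto
  have "4 ^ N \<le> card (B \<times> K)"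
    using card_inj_on_le[OF inj img] finB finK cU by simp
  then have ineq: "4 ^ N \<le> 2 ^ length gs * card K" using cB by (simp add: card_cartesian_product)
  have big: "card K > 2 ^ length gs"
  proof (rule ccontr)
    assume "\<not> ?thesis"
    then have "2 ^ length gs * card K \<le> (2::nat) ^ length gs * 2 ^ length gs" by simp
    also have "\<dots> = 4 ^ length gs" by (simp add: power_mult_distrib[symmetric])
    finally have "(4::nat) ^ N \<le> 4 ^ length gs" using ineq le_trans by blast
    then have "N \<le> length gs" by (rule power_le_imp_le_exp[rotated]) simp
    then show False using m by simp
  qed
  have sc: "finite (tspan N (set gs))" "card (tspan N (set gs)) \<le> 2 ^ length gs"
    using span_card[OF gs] by auto
  have "card (snd ` tspan N (set gs)) \<le> 2 ^ length gs"
    using card_image_le[OF sc(1), of snd] sc(2) by simp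
  then have "\<not> K \<subseteq> snd ` tspan N (set gs)"
    using big card_mono[OF finite_imageI[OF sc(1)]] by fastforce
  then obtain v where "v \<in> K" "v \<notin> snd ` tspan N (set gs)" by blast
  then show ?thesis unfolding K_def U_def by auto
qed

lemma ext_stab:
  assumes A: "A \<subseteq> toyG N" and st: "toy_stab N (tspan N A)" and h: "h \<in> toyG N"
    and c: "\<forall>g\<in>A. tcomm h g" and n1: "h \<notin> tspan N A" and n2: "tneg h \<notin> tspan N A"
  shows "toy_stab N (tspan N (insert h A))"
proof -
  let ?S = "tspan N A"
  have SG: "?S \<subseteq> toyG N" using span_toyG[OF A] .
  have eq: "tspan N (insert h A) = ?S \<union> tmul h ` ?S" using span_insert[OF A h] .
  have hS: "tcomm h x" "tcomm x h" if "x \<in> ?S" for x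
  proof -
    show "tcomm h x" using comm_span[OF h A c that] .
    then show "tcomm x h" using tcomm_sym[of x h] that SG h by (auto simp: toyG_iff)
  qed
  have SS: "tcomm x y" if "x \<in> ?S" "y \<in> ?S" for x y using st that unfolding toy_stab_def by auto
  have sub: "toy_subgroup N (tspan N (insert h A))"
    unfolding toy_subgroup_def using span_toyG[of "insert h A" N] A h
    by (auto intro: tspan.intros)
  have comm: "tcomm a b" if a: "a \<in> ?S \<union> tmul h ` ?S" and b: "b \<in> ?S \<union> tmul h ` ?S" for a b
  proof -
    from a consider (a1) "a \<in> ?S" | (a2) x where "x \<in> ?S" "a = tmul h x" by blast
    then show ?thesis
    proof cases
      case a1
      from b consider (b1) "b \<in> ?S" | (b2) y where "y \<in> ?S" "b = tmul h y" by blast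
      then show ?thesis
      proof cases
        case b1 then show ?thesis using a1 SS by auto
      next
        case b2 then show ?thesis using a1 SG h hS SS tcomm_mul2[of h N y a] by auto
      qed
    next
      case a2
      from b consider (b1) "b \<in> ?S" | (b2) y where "y \<in> ?S" "b = tmul h y" by blast
      then show ?thesis
      proof cases
        case b1 then show ?thesis using a2 SG h hS SS tcomm_mul1[of h N x b] by auto
      next
        case b2
        have xy: "x \<in> toyG N" "y \<in> toyG N" using a2 b2 SG by auto
        have "tcomm a b = (tcomm h b = tcomm x b)" using a2 tcomm_mul1[OF h xy(1)] b2 tmul_toyG[OF h xy(2)] by simp
        also have "tcomm h b = (tcomm h h = tcomm h y)" using b2 tcomm_mul2[OF h xy(2) h] by simp
        also have "tcomm x b = (tcomm x h = tcomm x y)" using b2 tcomm_mul2[OF h xy(2) xy(1)] by simp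
        finally show ?thesis using hS a2 b2 SS tcomm_self by auto
      qed
    qed
  qed
  have m1: "tminus_one N \<notin> tspan N (insert h A)"
  proof
    assume "tminus_one N \<in> tspan N (insert h A)"
    then have "tminus_one N \<in> ?S \<or> (\<exists>x\<in>?S. tminus_one N = tmul h x)" using eq by auto
    moreover have "tminus_one N \<notin> ?S" using st unfolding toy_stab_def by auto
    ultimately obtain x where x: "x \<in> ?S" "tminus_one N = tmul h x" by auto
    have "x \<in> toyG N" using x SG by auto
    then have "tmul h (tminus_one N) = x" using x tmul_cancel[OF h] by metis
    moreover have "tmul h (tminus_one N) = tneg h"
      using tneg_tone[of N] tneg_tmul2[of h "tone N"] tmul_one2[OF h] by simp
    ultimately show False using x n2 by simp
  qed
  show ?thesis unfolding toy_stab_def using sub comm m1 eq by auto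
qed

lemma ext_indep:
  assumes gs: "set gs \<subseteq> toyG N" and ind: "tindep N gs" and h: "h \<in> toyG N"
    and n1: "h \<notin> tspan N (set gs)"
  shows "tindep N (h # gs)"
proof -
  have hn: "h \<notin> set gs" using n1 tspan.gen by blast
  have "(h # gs) ! i \<notin> tspan N (set (h # gs) - {(h # gs) ! i})" if i: "i < length (h # gs)" for i
  proof (cases i)
    case 0
    then have "set (h # gs) - {(h # gs) ! i} = set gs" using hn by auto
    then show ?thesis using 0 n1 by simp
  next
    case (Suc j)
    let ?x = "gs ! j"
    have j: "j < length gs" using i Suc by simp
    have xin: "?x \<in> set gs" using j by simp
    have xh: "?x \<noteq> h" using hn xin by auto
    let ?A = "set gs - {?x}"
    have A: "?A \<subseteq> toyG N" using gs by auto
    have e: "set (h # gs) - {(h # gs) ! i} = insert h ?A" using Suc xh by auto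
    have nx: "?x \<notin> tspan N ?A" using ind j unfolding tindep_def by auto
    have S'S: "tspan N ?A \<subseteq> tspan N (set gs)" by (rule span_mono) auto
    show ?thesis
    proof
      assume "(h # gs) ! i \<in> tspan N (set (h # gs) - {(h # gs) ! i})"
      then have "?x \<in> tspan N ?A \<union> tmul h ` tspan N ?A" using Suc e span_insert[OF A h] by simp
      with nx obtain y where y: "y \<in> tspan N ?A" "?x = tmul h y" by auto
      have yG: "y \<in> toyG N" using y span_toyG[OF A] by auto
      have "tmul ?x y = h" using y(2) yG h
        by (metis tmul_assoc tmul_self tmul_one2)
      moreover have "tmul ?x y \<in> tspan N (set gs)"
        using y S'S xin by (auto intro: tspan.intros)
      ultimately show False using n1 by simp
    qed
  qed
  then show ?thesis using ind hn unfolding tindep_def by auto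
qed

lemma ext_inter:
  assumes A: "A \<subseteq> toyG N" and st: "toy_stab N (tspan N A)" and h: "h \<in> toyG N"
    and n1: "h \<notin> tspan N A"
  shows "tspan N (insert h A) \<inter> tspan N (insert (tneg h) A) = tspan N A"
proof -
  let ?S = "tspan N A"
  have SG: "?S \<subseteq> toyG N" using span_toyG[OF A] .
  have h': "tneg h \<in> toyG N" using h tneg_toyG by auto
  have "x \<in> ?S" if x1: "x \<in> ?S \<union> tmul h ` ?S" and x2: "x \<in> ?S \<union> tmul (tneg h) ` ?S" for x
  proof (rule ccontr)
    assume nx: "x \<notin> ?S"
    then obtain a b where ab: "a \<in> ?S" "b \<in> ?S" "x = tmul h a" "x = tmul (tneg h) b"
      using x1 x2 by blast
    have aG: "a \<in> toyG N" "b \<in> toyG N" using ab(1,2) SG by blast+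
    have "a = tmul h x" unfolding ab(3) by (rule tmul_cancel[OF h aG(1), symmetric])
    also have "\<dots> = tmul h (tneg (tmul h b))" unfolding ab(4) by (simp only: tneg_tmul1)
    also have "\<dots> = tneg b" by (simp only: tneg_tmul2 tmul_cancel[OF h aG(2)])
    finally have ae: "a = tneg b" .
    have "tmul a b = tminus_one N" unfolding ae tneg_tmul1 tmul_self[OF aG(2)] tneg_tone ..
    moreover have "tmul a b \<in> ?S" using ab(1,2) by (rule tspan.mul)
    ultimately show False using st unfolding toy_stab_def by simp
  qed
  moreover have "?S \<subseteq> tspan N (insert h A)" "?S \<subseteq> tspan N (insert (tneg h) A)"
    by (rule span_mono, blast)+
  ultimately show ?thesis unfolding span_insert[OF A h] span_insert[OF A h'] by blast
qed

lemma ext_reph: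
  assumes A: "A \<subseteq> toyG N" and h: "h \<in> toyG N"
  shows "rephasing_of (tspan N (insert h A)) (tspan N (insert (tneg h) A))"
proof -
  have h': "tneg h \<in> toyG N" using h tneg_toyG by auto
  show ?thesis unfolding rephasing_of_def span_insert[OF A h] span_insert[OF A h']
  proof
    fix g assume "g \<in> tspan N A \<union> tmul (tneg h) ` tspan N A"
    then consider "g \<in> tspan N A" | x where "x \<in> tspan N A" "g = tmul (tneg h) x" by blast
    then show "g \<in> tspan N A \<union> tmul h ` tspan N A \<or> tneg g \<in> tspan N A \<union> tmul h ` tspan N A"
    proof cases
      case 1 then show ?thesis by simp
    next
      case 2
      then have "tneg g = tmul h x" by (simp add: tneg_tmul1)
      then show ?thesis using 2 by auto
    qed
  qed
qed

lemma mixes_sub: "mixes N Gs T \<Longrightarrow> G \<in> set Gs \<Longrightarrow> T \<subseteq> G"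
  by (induction arbitrary: G rule: mixes.induct) auto

lemma mixes_len: "mixes N Gs T \<Longrightarrow> Gs \<noteq> []"
  by (induction rule: mixes.induct) auto

lemma main_ind:
  "k \<le> N \<Longrightarrow> length gs = N - k \<Longrightarrow> set gs \<subseteq> toyG N \<Longrightarrow> tindep N gs \<Longrightarrow>
   toy_stab N (tspan N (set gs)) \<Longrightarrow>
   \<exists>Gs. length Gs = 2 ^ k \<and> distinct Gs \<and> (\<forall>G\<in>set Gs. toy_pure N G) \<and>
           mixes N Gs (tspan N (set gs))"
proof (induction k arbitrary: gs)
  case 0
  have "toy_pure N (tspan N (set gs))" unfolding toy_pure_def using 0 by auto
  then show ?case using 0 by (intro exI[of _ "[tspan N (set gs)]"]) (auto intro: mixes.leaf)
next
  case (Suc k)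
  let ?S = "tspan N (set gs)"
  have SG: "?S \<subseteq> toyG N" using span_toyG[OF Suc.prems(3)] .
  obtain v where v: "length v = N" "\<forall>g\<in>set gs. tcomm (False, v) g" "v \<notin> snd ` ?S"
    using exists_ext[OF Suc.prems(3)] Suc.prems(1,2) by auto
  define h where "h = (False, v)"
  have hG: "h \<in> toyG N" and h'G: "tneg h \<in> toyG N" using v(1) by (auto simp: h_def toyG_iff tneg_def)
  have n1: "h \<notin> ?S" and n2: "tneg h \<notin> ?S" using v(3) unfolding h_def tneg_def by (auto simp: image_iff)
  have c1: "\<forall>g\<in>set gs. tcomm h g" and c2: "\<forall>g\<in>set gs. tcomm (tneg h) g"
    using v(2) by (auto simp: h_def tcomm_tneg1)
  have len: "length (h # gs) = N - k" "length (tneg h # gs) = N - k" using Suc.prems(1,2) by auto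
  have st1: "toy_stab N (tspan N (set (h # gs)))"
    using ext_stab[OF Suc.prems(3,5) hG c1 n1 n2] by simp
  have st2: "toy_stab N (tspan N (set (tneg h # gs)))"
    using ext_stab[OF Suc.prems(3,5) h'G c2 n2] n1 by simp
  have i1: "tindep N (h # gs)" using ext_indep[OF Suc.prems(3,4) hG n1] .
  have i2: "tindep N (tneg h # gs)" using ext_indep[OF Suc.prems(3,4) h'G n2] .
  have k: "k \<le> N" using Suc.prems(1) by simp
  obtain Gs1 where G1: "length Gs1 = 2 ^ k" "distinct Gs1" "\<forall>G\<in>set Gs1. toy_pure N G"
      "mixes N Gs1 (tspan N (set (h # gs)))"
    using Suc.IH[OF k len(1) _ i1 st1] Suc.prems(3) hG by auto
  obtain Gs2 where G2: "length Gs2 = 2 ^ k" "distinct Gs2" "\<forall>G\<in>set Gs2. toy_pure N G"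
      "mixes N Gs2 (tspan N (set (tneg h # gs)))"
    using Suc.IH[OF k len(2) _ i2 st2] Suc.prems(3) h'G by auto
  have disj: "set Gs1 \<inter> set Gs2 = {}"
  proof (rule ccontr)
    assume "set Gs1 \<inter> set Gs2 \<noteq> {}"
    then obtain G where G: "G \<in> set Gs1" "G \<in> set Gs2" by blast
    have "h \<in> G" using mixes_sub[OF G1(4) G(1)] by (auto intro: tspan.gen)
    moreover have "tneg h \<in> G" using mixes_sub[OF G2(4) G(2)] by (auto intro: tspan.gen)
    moreover have stG: "toy_stab N G" using G1(3) G(1) unfolding toy_pure_def by auto
    ultimately have "tmul h (tneg h) \<in> G" unfolding toy_stab_def toy_subgroup_def by auto
    moreover have "tmul h (tneg h) = tminus_one N"
      by (simp add: tneg_tmul2 tmul_self[OF hG] tneg_tone)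
    ultimately show False using stG unfolding toy_stab_def by auto
  qed
  have inter: "tspan N (set (h # gs)) \<inter> tspan N (set (tneg h # gs)) = ?S"
    using ext_inter[OF Suc.prems(3,5) hG n1] by simp
  have r1: "rephasing_of (tspan N (set (h # gs))) (tspan N (set (tneg h # gs)))"
    using ext_reph[OF Suc.prems(3) hG] by simp
  have r2: "rephasing_of (tspan N (set (tneg h # gs))) (tspan N (set (h # gs)))"
    using ext_reph[OF Suc.prems(3) h'G] by simp
  have "mixes N (Gs1 @ Gs2) ?S"
    using mixes.mix[OF G1(4) G2(4) st1 st2 r1 r2] inter by simp
  then show ?case using G1 G2 disj by (intro exI[of _ "Gs1 @ Gs2"]) auto
qed

theorem mainTheorem4:
  fixes N k :: nat and gs :: "toy list"
  assumes "k \<le> N"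
    and "length gs = N - k"
    and "set gs \<subseteq> toyG N"
    and "tindep N gs"
    and "toy_stab N (tspan N (set gs))"
  shows "\<exists>Gs. length Gs = 2 ^ k \<and> distinct Gs \<and> (\<forall>G\<in>set Gs. toy_pure N G) \<and>
           mixes N Gs (tspan N (set gs))"
  using main_ind[OF assms] .

end
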